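(* For $(p,q,r,s)$ define $$\mathcal{J}_1=\frac{(p^2+s^2)qr+\beta(p+s)(q^2+r^2+ps)+\beta^2qr}{pqrs},$$ $$\mathcal{J}_2=\frac{pr^2(q+r+s)+sq^2(p+q+r)+ps(pr+ps+qs)+\beta qr(q+r)}{pqrs},$$ $$\mathcal{J}_3=\frac{(ps+q^2+r^2)(pr^2+ps^2+q^2s+\beta qr)(pr^2+p^2s+q^2s+\beta qr)}{p^2q^2r^2s^2}.$$ Then for every $\beta\in\mathbb{Z}\setminus\{0\}$ and every $(\lambda_1:\lambda_2:\lambda_3)\in\mathbb{P}^2$, the Diophantine equation $$\lambda_1\mathcal{J}_1+\lambda_2\mathcal{J}_2+\lambda_3\mathcal{J}_3=\lambda_1(\beta^2+6\beta+2)+\lambda_2(2\beta+9)+3\lambda_3(\beta+3)^2$$ has infinitely many integer solutions $(p,q,r,s)$. *)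

theory Defs
  imports Complex_Main
begin

definition J1 :: "int \<Rightarrow> int \<Rightarrow> int \<Rightarrow> int \<Rightarrow> int \<Rightarrow> rat" where
  "J1 \<beta> p q r s =
     of_int ((p^2 + s^2)*q*r + \<beta>*(p+s)*(q^2 + r^2 + p*s) + \<beta>^2*q*r) / of_int (p*q*r*s)"

definition J2 :: "int \<Rightarrow> int \<Rightarrow> int \<Rightarrow> int \<Rightarrow> int \<Rightarrow> rat" where
  "J2 \<beta> p q r s =
     of_int (p*r^2*(q+r+s) + s*q^2*(p+q+r) + p*s*(p*r + p*s + q*s) + \<beta>*q*r*(q+r))
     / of_int (p*q*r*s)"

definition J3 :: "int \<Rightarrow> int \<Rightarrow> int \<Rightarrow> int \<Rightarrow> int \<Rightarrow> rat" where
  "J3 \<beta> p q r s =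
     of_int ((p*s + q^2 + r^2) * (p*r^2 + p*s^2 + q^2*s + \<beta>*q*r)
             * (p*r^2 + p^2*s + q^2*s + \<beta>*q*r))
     / of_int (p^2*q^2*r^2*s^2)"

end

theory Submission
  imports Defs
begin

lemma mem_lemma:
  fixes B p q r s :: int and l1 l2 l3 :: rat
  assumes nz: "p*q*r*s \<noteq> 0"
    and N1: "(p^2 + s^2)*q*r + B*(p+s)*(q^2 + r^2 + p*s) + B^2*q*r = (B^2+6*B+2)*(p*q*r*s)"
    and N2: "p*r^2*(q+r+s) + s*q^2*(p+q+r) + p*s*(p*r + p*s + q*s) + B*q*r*(q+r) = (2*B+9)*(p*q*r*s)"
    and N3: "(p*s + q^2 + r^2) * (p*r^2 + p*s^2 + q^2*s + B*q*r)
             * (p*r^2 + p^2*s + q^2*s + B*q*r) = 3*(B+3)^2*(p^2*q^2*r^2*s^2)"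
  shows "l1 * J1 B p q r s + l2 * J2 B p q r s + l3 * J3 B p q r s =
           l1 * of_int (B^2 + 6*B + 2) + l2 * of_int (2*B + 9)
             + 3 * l3 * of_int ((B + 3)^2)"
proof -
  have d1: "(of_int (p*q*r*s) :: rat) \<noteq> 0" using nz by simp
  have d2: "(of_int (p^2*q^2*r^2*s^2) :: rat) \<noteq> 0" using nz
    by (metis mult_eq_0_iff of_int_eq_0_iff power_not_zero)
  have e1: "J1 B p q r s = of_int (B^2 + 6*B + 2)"
    unfolding J1_def N1 using d1 by (simp only: of_int_mult) simp
  have e2: "J2 B p q r s = of_int (2*B + 9)"
    unfolding J2_def N2 using d1 by (simp only: of_int_mult) simp
  have e3: "J3 B p q r s = 3 * of_int ((B + 3)^2)"
  proof -
    have "J3 B p q r s = of_int (3*(B+3)^2) * of_int (p^2*q^2*r^2*s^2) / of_int (p^2*q^2*r^2*s^2)"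
      unfolding J3_def N3 by (simp only: of_int_mult)
    also have "\<dots> = of_int (3*(B+3)^2)" using d2 by simp
    finally show ?thesis by simp
  qed
  show ?thesis using e1 e2 e3 by simp
qed

fun st :: "int \<Rightarrow> nat \<Rightarrow> int \<times> int \<times> int" where
  "st B 0 = (-1, 0, 0)"
| "st B (Suc n) = (case st B n of (a, b, R) \<Rightarrow> (b, (B^2+6*B+2)*b - a, R + b))"

definition sa where "sa B n = fst (st B n)"
definition sb where "sb B n = fst (snd (st B n))"
definition sR where "sR B n = snd (snd (st B n))"

lemma st_0: "sa B 0 = -1" "sb B 0 = 0" "sR B 0 = 0"
  by (simp_all add: sa_def sb_def sR_def)

lemma st_Suc: "sa B (Suc n) = sb B n" "sb B (Suc n) = (B^2+6*B+2) * sb B n - sa B n"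
  "sR B (Suc n) = sR B n + sb B n"
  by (simp_all add: sa_def sb_def sR_def split: prod.splits)

lemma st_inv:
  "(B^2+6*B)*sR B n = sb B n - sa B n - 1 \<and>
   (sa B n)^2-(B^2+6*B+2)*sa B n*sb B n+(sb B n)^2 = 1 \<and>
   (B^2+6*B)*(sR B n)^2+2*sR B n = sa B n*sb B n"
proof (induction n)
  case 0
  then show ?case by (simp add: st_0)
next
  case (Suc n)
  then have h1: "(B^2+6*B)*sR B n = sb B n - sa B n - 1"
    and h2: "(sa B n)^2-(B^2+6*B+2)*sa B n*sb B n+(sb B n)^2 = 1"
    and h3: "(B^2+6*B)*(sR B n)^2+2*sR B n = sa B n*sb B n" by auto
  show ?case unfolding st_Suc using h1 h2 h3 by algebra
qed

lemma k1:
  fixes B a b R :: int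
  assumes h1: "(B^2+6*B)*R = b-a-1" and h2: "a^2-(B^2+6*B+2)*a*b+b^2 = 1"
    and h3: "(B^2+6*B)*R^2+2*R = a*b"
  shows "let p = -a+b-3*B*R; q = -a+(B+1)*b-B*(B+3)*R; r = -a+(2*B+1)*b-B*(B+3)*R;
             s = -a+(B^2+3*B+1)*b-3*B*R in
     (p^2 + s^2)*q*r + B*(p+s)*(q^2 + r^2 + p*s) + B^2*q*r = (B^2+6*B+2)*(p*q*r*s)"
  using h1 h2 h3 unfolding Let_def by algebra

lemma k2:
  fixes B a b R :: int
  assumes h1: "(B^2+6*B)*R = b-a-1" and h2: "a^2-(B^2+6*B+2)*a*b+b^2 = 1"
    and h3: "(B^2+6*B)*R^2+2*R = a*b"
  shows "let p = -a+b-3*B*R; q = -a+(B+1)*b-B*(B+3)*R; r = -a+(2*B+1)*b-B*(B+3)*R;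
             s = -a+(B^2+3*B+1)*b-3*B*R in
     p*r^2*(q+r+s) + s*q^2*(p+q+r) + p*s*(p*r + p*s + q*s) + B*q*r*(q+r) = (2*B+9)*(p*q*r*s)"
  using h1 h2 h3 unfolding Let_def by algebra

lemma k3:
  fixes B a b R :: int
  assumes h1: "(B^2+6*B)*R = b-a-1" and h2: "a^2-(B^2+6*B+2)*a*b+b^2 = 1"
    and h3: "(B^2+6*B)*R^2+2*R = a*b"
  shows "let p = -a+b-3*B*R; q = -a+(B+1)*b-B*(B+3)*R; r = -a+(2*B+1)*b-B*(B+3)*R;
             s = -a+(B^2+3*B+1)*b-3*B*R in
     (p*s + q^2 + r^2) * (p*r^2 + p*s^2 + q^2*s + B*q*r)
             * (p*r^2 + p^2*s + q^2*s + B*q*r) = 3*(B+3)^2*(p^2*q^2*r^2*s^2)"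
  using h1 h2 h3 unfolding Let_def by algebra

lemma C_big: fixes B :: int shows "B^2+6*B+2 \<ge> 2 \<or> B^2+6*B+2 \<le> -3"
proof (cases "\<bar>B+3\<bar> \<ge> 3")
  case True
  then have "(B+3)^2 \<ge> 9"
  proof -
    have "\<bar>B+3\<bar> * \<bar>B+3\<bar> \<ge> 3*3" using True by (intro mult_mono) auto
    then show ?thesis by (simp add: power2_eq_square abs_mult_self_eq)
  qed
  then show ?thesis by (simp add: power2_eq_square algebra_simps)
next
  case False
  then have "\<bar>B+3\<bar> \<le> 2" by simp
  then have "(B+3)^2 \<le> 4"
  proof -
    have "\<bar>B+3\<bar> * \<bar>B+3\<bar> \<le> 2*2" using \<open>\<bar>B+3\<bar> \<le> 2\<close> by (intro mult_mono) auto
    then show ?thesis by (simp add: power2_eq_square abs_mult_self_eq)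
  qed
  then show ?thesis by (simp add: power2_eq_square algebra_simps)
qed

lemma sb_grow: "\<bar>sb B (Suc n)\<bar> > \<bar>sb B n\<bar> \<and> \<bar>sb B (Suc n)\<bar> > \<bar>sa B (Suc n)\<bar>"
proof (induction n)
  case 0
  then show ?case by (simp add: st_Suc st_0)
next
  case (Suc n)
  define a where "a = sb B n"
  define b where "b = sb B (Suc n)"
  define C where "C = B^2+6*B+2"
  have ab: "\<bar>b\<bar> > \<bar>a\<bar>" using Suc by (simp add: a_def b_def st_Suc)
  have C2: "\<bar>C\<bar> \<ge> 2" using C_big[of B] unfolding C_def by linarith
  have "\<bar>C*b\<bar> \<ge> 2*\<bar>b\<bar>" using C2 by (simp add: abs_mult mult_right_mono)
  then have "\<bar>C*b - a\<bar> > \<bar>b\<bar>" using ab by linarith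
  then show ?case by (simp add: st_Suc a_def b_def C_def)
qed

lemma sb_mono: "m < n \<Longrightarrow> \<bar>sb B m\<bar> < \<bar>sb B n\<bar>"
proof (induction n)
  case 0 then show ?case by simp
next
  case (Suc n)
  then show ?case using sb_grow[of B n] by (cases "m = n") auto
qed

lemma pos_inv: assumes "B > 0" shows "0 \<le> sR B n \<and> 0 \<le> sb B n \<and> sa B n \<le> sb B n"
proof (induction n)
  case 0 then show ?case by (simp add: st_0)
next
  case (Suc n)
  have "B^2+6*B+2 \<ge> 9" using assms
  proof -
    have "B*B \<ge> 1*1" using assms by (intro mult_mono) auto
    then show ?thesis using assms by (simp add: power2_eq_square)
  qed
  then have "(B^2+6*B+2) * sb B n \<ge> 9 * sb B n" using Suc by (simp add: mult_right_mono)
  then show ?case using Suc by (simp add: st_Suc)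
qed

fun fp :: "nat \<Rightarrow> int \<times> int" where
  "fp 0 = (1, 2)"
| "fp (Suc n) = (case fp n of (x, y) \<Rightarrow> (x + y, x + 2*y))"

lemma fp_inv: "0 < fst (fp n) \<and> fst (fp n) < snd (fp n) \<and>
   (snd (fp n))^2 - fst (fp n) * snd (fp n) - (fst (fp n))^2 = 1"
proof (induction n)
  case 0 then show ?case by simp
next
  case (Suc n)
  obtain x y where xy: "fp n = (x, y)" by (cases "fp n")
  have "0 < x" "x < y" "y^2 - x*y - x^2 = 1" using Suc xy by auto
  then have "(x + 2*y)^2 - (x+y)*(x+2*y) - (x+y)^2 = 1" by algebra
  then show ?case using \<open>0 < x\<close> \<open>x < y\<close> xy by simp
qed

lemma fp_mono: "m < n \<Longrightarrow> fst (fp m) < fst (fp n)"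
proof (induction n)
  case 0 then show ?case by simp
next
  case (Suc n)
  have "fst (fp n) < fst (fp (Suc n))" using fp_inv[of n]
    by (cases "fp n") auto
  then show ?case using Suc by (cases "m = n") auto
qed

lemma fk:
  fixes x y :: int
  assumes h: "y^2 - x*y - x^2 = 1"
  shows "let p = y^2; q = y^2 + x*y - x^2; r = -(x^2); s = -((x+y)^2); B = -1 in
     (p^2 + s^2)*q*r + B*(p+s)*(q^2 + r^2 + p*s) + B^2*q*r = (B^2+6*B+2)*(p*q*r*s) \<and>
     p*r^2*(q+r+s) + s*q^2*(p+q+r) + p*s*(p*r + p*s + q*s) + B*q*r*(q+r) = (2*B+9)*(p*q*r*s) \<and>
     (p*s + q^2 + r^2) * (p*r^2 + p*s^2 + q^2*s + B*q*r)
             * (p*r^2 + p^2*s + q^2*s + B*q*r) = 3*(B+3)^2*(p^2*q^2*r^2*s^2)"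
  using h unfolding Let_def by (intro conjI; algebra)
theorem corollary3p8:
  fixes \<beta> :: int and l1 l2 l3 :: rat
  assumes "\<beta> \<noteq> 0"
    and "(l1, l2, l3) \<noteq> (0, 0, 0)"
  shows "infinite {(p::int, q::int, r::int, s::int).
           p * q * r * s \<noteq> 0 \<and>
           l1 * J1 \<beta> p q r s + l2 * J2 \<beta> p q r s + l3 * J3 \<beta> p q r s =
           l1 * of_int (\<beta>^2 + 6*\<beta> + 2) + l2 * of_int (2*\<beta> + 9)
             + 3 * l3 * of_int ((\<beta> + 3)^2)}" (is "infinite ?S")
proof (cases "\<beta> = -1")
  case True
  define f where "f n = (let x = fst (fp n); y = snd (fp n) in
     (y^2, y^2 + x*y - x^2, -(x^2), -((x+y)^2)))" for n
  have inj: "inj f"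
  proof (rule injI)
    fix m n assume "f m = f n"
    then have "fst (fp m) ^2 = fst (fp n) ^2" unfolding f_def Let_def by simp
    then have "fst (fp m) = fst (fp n)" using fp_inv[of m] fp_inv[of n]
      by (simp add: power2_eq_iff_nonneg less_imp_le)
    then show "m = n" using fp_mono[of m n] fp_mono[of n m] by (metis less_irrefl nat_neq_iff)
  qed
  have "range f \<subseteq> ?S"
  proof
    fix z assume "z \<in> range f"
    then obtain n where z: "z = f n" by auto
    define x where "x = fst (fp n)"
    define y where "y = snd (fp n)"
    have x0: "0 < x" and xy: "x < y" and h: "y^2 - x*y - x^2 = 1"
      using fp_inv[of n] unfolding x_def y_def by auto
    have zz: "z = (y^2, y^2 + x*y - x^2, -(x^2), -((x+y)^2))"
      unfolding z f_def Let_def x_def y_def by simp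
    have "x*y > 0" using x0 xy by simp
    moreover have "y^2 + x*y - x^2 = 1 + 2*(x*y)" using h by algebra
    ultimately have "y^2 + x*y - x^2 \<noteq> 0" by linarith
    then have nz: "y^2 * (y^2 + x*y - x^2) * (-(x^2)) * (-((x+y)^2)) \<noteq> 0"
      using x0 xy h by auto
    show "z \<in> ?S" unfolding zz True
      apply (simp only: mem_Collect_eq case_prod_conv)
      apply (rule conjI[OF nz])
      apply (rule mem_lemma[OF nz])
      using fk[OF h] unfolding Let_def by simp_all
  qed
  then have sub: "range f \<subseteq> ?S" .
  show ?thesis
  proof
    assume "finite ?S"
    then have "finite (range f)" using sub finite_subset by blast
    then have "finite (UNIV :: nat set)" using finite_imageD inj by blast
    then show False by simp
  qed
next
  case False
  define f where "f n = (let a = sa \<beta> (Suc n); b = sb \<beta> (Suc n); R = sR \<beta> (Suc n) in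
     (-a+b-3*\<beta>*R, -a+(\<beta>+1)*b-\<beta>*(\<beta>+3)*R, -a+(2*\<beta>+1)*b-\<beta>*(\<beta>+3)*R,
      -a+(\<beta>^2+3*\<beta>+1)*b-3*\<beta>*R))" for n
  have inj: "inj f"
  proof (rule injI)
    fix m n assume e: "f m = f n"
    have g: "fst (snd (snd (f k))) - fst (snd (f k)) = \<beta> * sb \<beta> (Suc k)" for k
      unfolding f_def Let_def by (simp add: algebra_simps)
    have "\<beta> * sb \<beta> (Suc m) = fst (snd (snd (f m))) - fst (snd (f m))" by (rule g[symmetric])
    also have "\<dots> = fst (snd (snd (f n))) - fst (snd (f n))" using e by (simp only:)
    also have "\<dots> = \<beta> * sb \<beta> (Suc n)" by (rule g)
    finally have "\<beta> * sb \<beta> (Suc m) = \<beta> * sb \<beta> (Suc n)" .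
    then have "sb \<beta> (Suc m) = sb \<beta> (Suc n)" using assms(1) by simp
    then show "m = n" using sb_mono[of "Suc m" "Suc n" \<beta>] sb_mono[of "Suc n" "Suc m" \<beta>]
      by (metis Suc_less_eq less_irrefl nat_neq_iff)
  qed
  have "range f \<subseteq> ?S"
  proof
    fix z assume "z \<in> range f"
    then obtain n where z: "z = f n" by auto
    define a where "a = sa \<beta> (Suc n)"
    define b where "b = sb \<beta> (Suc n)"
    define R where "R = sR \<beta> (Suc n)"
    have h1: "(\<beta>^2+6*\<beta>)*R = b-a-1" and h2: "a^2-(\<beta>^2+6*\<beta>+2)*a*b+b^2 = 1"
      and h3: "(\<beta>^2+6*\<beta>)*R^2+2*R = a*b"
      using st_inv[of \<beta> "Suc n"] unfolding a_def b_def R_def by auto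
    define p where "p = -a+b-3*\<beta>*R"
    define q where "q = -a+(\<beta>+1)*b-\<beta>*(\<beta>+3)*R"
    define r where "r = -a+(2*\<beta>+1)*b-\<beta>*(\<beta>+3)*R"
    define s where "s = -a+(\<beta>^2+3*\<beta>+1)*b-3*\<beta>*R"
    have zz: "z = (p, q, r, s)" unfolding z f_def Let_def p_def q_def r_def s_def a_def b_def R_def
      by simp
    have pe: "p = 1 + \<beta>*((\<beta>+3)*R)" using h1 unfolding p_def by algebra
    have qe: "q = 1 + \<beta>*(b + 3*R)" using h1 unfolding q_def by algebra
    have re: "r = 1 + \<beta>*(2*b + 3*R)" using h1 unfolding r_def by algebra
    have se: "s = 1 + \<beta>*((\<beta>+3)*R + (\<beta>+3)*b)" using h1 unfolding s_def by algebra
    have ne: "1 + \<beta>*k \<noteq> 0" if "\<beta> < 0" for k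
    proof
      assume "1 + \<beta>*k = 0"
      then have "\<beta> * k = -1" by simp
      then have "\<beta> dvd 1" by (metis dvd_minus_iff dvd_triv_left)
      then have "\<bar>\<beta>\<bar> = 1" by (simp add: zdvd1_eq)
      then show False using False that by simp
    qed
    have nz: "p*q*r*s \<noteq> 0"
    proof (cases "\<beta> > 0")
      case True
      have "0 \<le> R" "0 \<le> b" using pos_inv[OF True, of "Suc n"] unfolding R_def b_def by auto
      then have "p > 0" "q > 0" "r > 0" "s > 0" unfolding pe qe re se using True
        by (simp_all add: add_pos_nonneg)
      then show ?thesis by simp
    next
      case f: False
      then have "\<beta> < 0" using assms(1) by simp
      then show ?thesis unfolding pe qe re se using ne by simp
    qed
    show "z \<in> ?S" unfolding zz
      apply (simp only: mem_Collect_eq case_prod_conv)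
      apply (rule conjI[OF nz])
      apply (rule mem_lemma[OF nz])
      unfolding p_def q_def r_def s_def
        using k1[OF h1 h2 h3] k2[OF h1 h2 h3] k3[OF h1 h2 h3] by (simp_all only: Let_def)
  qed
  then have sub: "range f \<subseteq> ?S" .
  show ?thesis
  proof
    assume "finite ?S"
    then have "finite (range f)" using sub finite_subset by blast
    then have "finite (UNIV :: nat set)" using finite_imageD inj by blast
    then show False by simp
  qed
qed

end
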